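(* Let $k\ge 1$ and $N=2^{k+1}$. There exist a finite field $\mathbb{F}_q$ of order $q\ge 2k+3$ and explicit constants $a_i,b_i\in\mathbb{F}_q$ with $a_i^2-b_i^2=-1$ for all $i\in\{1,\ldots,k\}$, such that the $(k+2,k)$ storage code with coding matrices $\mathbf{A}_i=a_i\mathbf{X}_i+b_i\mathbf{X}_{k+1}+\mathbf{I}_N$ ($i=1,\ldots,k$) is a repair optimal MDS storage code; that is: (1) (MDS) for every choice of $k$ of the $k+2$ nodes, the file $\mathbf{f}$ is uniquely determined by (computable from) the contents of those $k$ nodes; and (2) (optimal repair) for every single node (systematic or parity), the contents of that node can be exactly recovered from a total of $(k+1)\frac{N}{2}$ downloaded symbols, namely $\frac{N}{2}$ $\mathbb{F}_q$-linear combinations of the stored contents of each of the other $k+1$ nodes.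
   Context: All arithmetic is over a finite field $\mathbb{F}_q$; $-1$ denotes the field element $q-1$. A file $\mathbf{f}\in\mathbb{F}_q^{kN}$ is partitioned as $\mathbf{f}=[\mathbf{f}_1^T\ \cdots\ \mathbf{f}_k^T]^T$ with each $\mathbf{f}_i\in\mathbb{F}_q^N$. The $(k+2,k)$ storage code with $N\times N$ coding matrices $\mathbf{A}_1,\ldots,\mathbf{A}_k$ consists of $k+2$ nodes, each storing $N$ symbols: systematic node $i\in\{1,\ldots,k\}$ stores $\mathbf{f}_i$; the first parity node stores $\mathbf{f}_1+\cdots+\mathbf{f}_k$; the second parity node stores $\mathbf{A}_1^T\mathbf{f}_1+\cdots+\mathbf{A}_k^T\mathbf{f}_k$. For $i\in\{1,\ldots,k+1\}$, $\mathbf{X}_i=\mathbf{I}_{2^{i-1}}\otimes\mathrm{blkdiag}\big(\mathbf{I}_{N/2^i},-\mathbf{I}_{N/2^i}\big)$, an $N\times N$ diagonal matrix with entries $\pm1$; $\otimes$ is the Kronecker product and $\mathbf{I}_r$ the $r\times r$ identity. (The value $(k+1)\frac{N}{2}$ is the known information-theoretic minimum repair bandwidth for a single node of a $(k+2,k)$ MDS code storing $N$ symbols per node.) *)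

theory Defs
  imports "HOL-Algebra.Algebra"
begin

text \<open>A finite field is represented as an HOL-Algebra ring record R with carrier a
  finite subset of nat (every finite field is isomorphic to such a structure).
  Indices: systematic blocks i in {1..k}, positions r, c in {0..<N}.
  A file is f :: nat => nat => nat, f i r = r-th entry of block f_i.
  Coding matrices: A :: nat => nat => nat => nat, A i r c = (r,c) entry of A_i.\<close>

definition is_file :: "nat ring \<Rightarrow> nat \<Rightarrow> nat \<Rightarrow> (nat \<Rightarrow> nat \<Rightarrow> nat) \<Rightarrow> bool" where
  "is_file R k N f \<longleftrightarrow> (\<forall>i\<in>{1..k}. \<forall>r<N. f i r \<in> carrier R)"

definition matT_vec :: "nat ring \<Rightarrow> nat \<Rightarrow> (nat \<Rightarrow> nat \<Rightarrow> nat) \<Rightarrow> (nat \<Rightarrow> nat) \<Rightarrow> nat \<Rightarrow> nat" where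
  "matT_vec R N M v r = finsum R (\<lambda>c. M c r \<otimes>\<^bsub>R\<^esub> v c) {..<N}"

definition node_content ::
  "nat ring \<Rightarrow> nat \<Rightarrow> nat \<Rightarrow> (nat \<Rightarrow> nat \<Rightarrow> nat \<Rightarrow> nat) \<Rightarrow> nat \<Rightarrow> (nat \<Rightarrow> nat \<Rightarrow> nat) \<Rightarrow> nat \<Rightarrow> nat" where
  "node_content R k N A j f r =
     (if j \<in> {1..k} then f j r
      else if j = k + 1 then finsum R (\<lambda>i. f i r) {1..k}
      else finsum R (\<lambda>i. matT_vec R N (A i) (f i) r) {1..k})"

definition is_MDS_code :: "nat ring \<Rightarrow> nat \<Rightarrow> nat \<Rightarrow> (nat \<Rightarrow> nat \<Rightarrow> nat \<Rightarrow> nat) \<Rightarrow> bool" where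
  "is_MDS_code R k N A \<longleftrightarrow>
     (\<forall>S. S \<subseteq> {1..k+2} \<and> card S = k \<longrightarrow>
       (\<forall>f f'. is_file R k N f \<and> is_file R k N f' \<and>
          (\<forall>j\<in>S. \<forall>r<N. node_content R k N A j f r = node_content R k N A j f' r)
          \<longrightarrow> (\<forall>i\<in>{1..k}. \<forall>r<N. f i r = f' i r)))"

text \<open>Total download: (k+1)*N/2 symbols.\<close>
definition download ::
  "nat ring \<Rightarrow> nat \<Rightarrow> nat \<Rightarrow> (nat \<Rightarrow> nat \<Rightarrow> nat \<Rightarrow> nat) \<Rightarrow> nat \<Rightarrow> (nat \<Rightarrow> nat \<Rightarrow> nat \<Rightarrow> nat)
     \<Rightarrow> (nat \<Rightarrow> nat \<Rightarrow> nat) \<Rightarrow> nat \<Rightarrow> nat \<Rightarrow> nat" where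
  "download R k N A j S f i t =
     (if i \<in> {1..k+2} - {j} \<and> t < N div 2
      then finsum R (\<lambda>c. S i t c \<otimes>\<^bsub>R\<^esub> node_content R k N A i f c) {..<N}
      else \<zero>\<^bsub>R\<^esub>)"

definition repair_optimal :: "nat ring \<Rightarrow> nat \<Rightarrow> nat \<Rightarrow> (nat \<Rightarrow> nat \<Rightarrow> nat \<Rightarrow> nat) \<Rightarrow> bool" where
  "repair_optimal R k N A \<longleftrightarrow>
     (\<forall>j\<in>{1..k+2}. \<exists>S :: nat \<Rightarrow> nat \<Rightarrow> nat \<Rightarrow> nat.
        (\<forall>i\<in>{1..k+2} - {j}. \<forall>t<N div 2. \<forall>c<N. S i t c \<in> carrier R) \<and>
        (\<forall>f f'. is_file R k N f \<and> is_file R k N f' \<and>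
           (\<forall>i t. download R k N A j S f i t = download R k N A j S f' i t)
           \<longrightarrow> (\<forall>r<N. node_content R k N A j f r = node_content R k N A j f' r)))"

text \<open>X_i = I_{2^(i-1)} (x) blkdiag(I_{N/2^i}, -I_{N/2^i}): diagonal entry at 0-based
  position r is 1 if (r div (N/2^i)) is even, else -1.\<close>
definition Xdiag :: "nat ring \<Rightarrow> nat \<Rightarrow> nat \<Rightarrow> nat \<Rightarrow> nat" where
  "Xdiag R N i r = (if even (r div (N div 2 ^ i)) then \<one>\<^bsub>R\<^esub> else \<ominus>\<^bsub>R\<^esub> \<one>\<^bsub>R\<^esub>)"

definition coding_mats :: "nat ring \<Rightarrow> nat \<Rightarrow> nat \<Rightarrow> (nat \<Rightarrow> nat) \<Rightarrow> (nat \<Rightarrow> nat) \<Rightarrow> nat \<Rightarrow> nat \<Rightarrow> nat \<Rightarrow> nat" where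
  "coding_mats R k N a b i r c =
     (if r = c then (a i \<otimes>\<^bsub>R\<^esub> Xdiag R N i r) \<oplus>\<^bsub>R\<^esub> (b i \<otimes>\<^bsub>R\<^esub> Xdiag R N (k+1) r) \<oplus>\<^bsub>R\<^esub> \<one>\<^bsub>R\<^esub>
      else \<zero>\<^bsub>R\<^esub>)"

end

theory Submission
  imports Defs "HOL-Number_Theory.Residues"
begin
definition ZP :: "nat \<Rightarrow> nat ring" where
  "ZP p = \<lparr>carrier = {..<p}, monoid.mult = (\<lambda>x y. x * y mod p), one = 1, ring.zero = 0,
           ring.add = (\<lambda>x y. (x + y) mod p)\<rparr>"

lemma ZP_field:
  assumes p: "Factorial_Ring.prime (p::nat)"
  shows "field (ZP p)"
proof -
  have p1: "p > 1" using p prime_gt_1_nat by blast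
  have F: "field (residue_ring (int p))"
    by (rule residues_prime.is_field) (unfold_locales, rule p)
  have iso: "nat \<in> ring_iso (residue_ring (int p)) (ZP p)"
  proof -
    have hom: "nat \<in> ring_hom (residue_ring (int p)) (ZP p)"
      unfolding ring_hom_def residue_ring_def ZP_def
      using p1 by (auto simp: nat_mod_distrib nat_mult_distrib nat_add_distrib)
    have "bij_betw nat {0..int p - 1} {..<p}"
      unfolding bij_betw_def inj_on_def
      by (auto simp: image_iff intro!: bexI[where x="int _"])
    then show ?thesis using hom unfolding ring_iso_def residue_ring_def ZP_def by auto
  qed
  have "field ((ZP p)\<lparr>zero := nat \<zero>\<^bsub>residue_ring (int p)\<^esub>\<rparr>)"
    using field.ring_iso_imp_img_field[OF F iso] .
  moreover have "(ZP p)\<lparr>zero := nat \<zero>\<^bsub>residue_ring (int p)\<^esub>\<rparr> = ZP p"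
    by (simp add: ZP_def residue_ring_def)
  ultimately show ?thesis by simp
qed

lemma lt_pow_bits: "(x::nat) < 2^n \<longleftrightarrow> (\<forall>m\<ge>n. \<not> bit x m)"
proof
  assume "x < 2^n"
  then show "\<forall>m\<ge>n. \<not> bit x m"
    by (metis bit_take_bit_iff not_le take_bit_nat_eq_self_iff)
next
  assume H: "\<forall>m\<ge>n. \<not> bit x m"
  have "take_bit n x = x"
    by (rule bit_eqI) (use H not_le in \<open>auto simp: bit_take_bit_iff\<close>)
  then show "x < 2^n" using take_bit_nat_eq_self_iff by blast
qed

lemma Xdiag_bit:
  assumes "1 \<le> i" "i \<le> k + 1"
  shows "Xdiag R (2^(k+1)) i r = (if bit r (k+1-i) then \<ominus>\<^bsub>R\<^esub> \<one>\<^bsub>R\<^esub> else \<one>\<^bsub>R\<^esub>)"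
proof -
  have "(2::nat)^(k+1) div 2^i = 2^(k+1-i)"
    using assms by (simp add: power_diff)
  then show ?thesis unfolding Xdiag_def by (simp add: bit_iff_odd)
qed

lemma pair_enum:
  fixes \<rho> :: "nat \<Rightarrow> nat" and N :: nat and P :: "nat \<Rightarrow> bool"
  assumes rl: "\<And>r. r < N \<Longrightarrow> \<rho> r < N"
    and ri: "\<And>r. r < N \<Longrightarrow> \<rho> (\<rho> r) = r"
    and rp: "\<And>r. r < N \<Longrightarrow> P (\<rho> r) \<longleftrightarrow> \<not> P r"
  shows "\<exists>e. (\<forall>t<N div 2. e t < N \<and> P (e t)) \<and> (\<forall>r<N. \<exists>t<N div 2. r = e t \<or> r = \<rho> (e t))"
proof -
  define Rep where "Rep = {r. r < N \<and> P r}"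
  have fin: "finite Rep" unfolding Rep_def by auto
  have inj: "inj_on \<rho> Rep"
  proof (rule inj_onI)
    fix x y assume xy: "x \<in> Rep" "y \<in> Rep" "\<rho> x = \<rho> y"
    have "x = \<rho> (\<rho> x)" using ri xy(1) unfolding Rep_def by simp
    also have "\<dots> = \<rho> (\<rho> y)" using xy(3) by simp
    also have "\<dots> = y" using ri xy(2) unfolding Rep_def by simp
    finally show "x = y" .
  qed
  have un: "{..<N} = Rep \<union> \<rho> ` Rep"
  proof
    show "{..<N} \<subseteq> Rep \<union> \<rho> ` Rep"
    proof
      fix x assume x: "x \<in> {..<N}"
      show "x \<in> Rep \<union> \<rho> ` Rep"
      proof (cases "P x")
        case True then show ?thesis using x unfolding Rep_def by simp
      next
        case False
        have "\<rho> x \<in> Rep" using x False rp[of x] rl[of x] unfolding Rep_def by simp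
        moreover have "x = \<rho> (\<rho> x)" using ri x by simp
        ultimately show ?thesis by blast
      qed
    qed
    show "Rep \<union> \<rho> ` Rep \<subseteq> {..<N}" using rl unfolding Rep_def by auto
  qed
  have dj: "Rep \<inter> \<rho> ` Rep = {}" using rp unfolding Rep_def by auto
  have "N = card {..<N}" by simp
  also have "\<dots> = card Rep + card (\<rho> ` Rep)"
    using card_Un_disjoint[OF fin finite_imageI[OF fin] dj] un by simp
  also have "card (\<rho> ` Rep) = card Rep" using card_image[OF inj] .
  finally have cN: "card Rep = N div 2" by simp
  obtain e where e: "bij_betw e {0..<card Rep} Rep" using ex_bij_betw_nat_finite[OF fin] by blast
  have im: "e ` {0..<N div 2} = Rep" using e cN unfolding bij_betw_def by simp
  show ?thesis
  proof (rule exI[of _ e], intro conjI allI impI)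
    fix t assume "t < N div 2"
    then have "e t \<in> Rep" using im by auto
    then show "e t < N" "P (e t)" unfolding Rep_def by auto
  next
    fix r assume r: "r < N"
    show "\<exists>t<N div 2. r = e t \<or> r = \<rho> (e t)"
    proof (cases "P r")
      case True
      then have "r \<in> Rep" using r unfolding Rep_def by simp
      then obtain t where "t < N div 2" "r = e t" using im by (metis atLeastLessThan_iff imageE)
      then show ?thesis by blast
    next
      case False
      then have "\<rho> r \<in> Rep" using r rp[of r] rl[of r] unfolding Rep_def by simp
      then obtain t where t: "t < N div 2" "\<rho> r = e t" using im by (metis atLeastLessThan_iff imageE)
      have "r = \<rho> (e t)" using ri[OF r] t(2) by simp
      then show ?thesis using t(1) by blast
    qed
  qed
qed

lemma flip_props:
  assumes "m \<le> k" "(r::nat) < 2^(k+1)"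
  shows "flip_bit m r < 2^(k+1)" "flip_bit m (flip_bit m r) = r"
    "bit (flip_bit m r) n \<longleftrightarrow> (if n = m then \<not> bit r n else bit r n)"
proof -
  show b: "\<And>n. bit (flip_bit m r) n \<longleftrightarrow> (if n = m then \<not> bit r n else bit r n)"
    by (auto simp: bit_flip_bit_iff)
  show "flip_bit m r < 2^(k+1)" using assms b unfolding lt_pow_bits by auto
  show "flip_bit m (flip_bit m r) = r" by (rule bit_eqI) (auto simp: bit_flip_bit_iff)
qed

lemma xor_props:
  assumes "(c::nat) < 2^(k+1)" "(r::nat) < 2^(k+1)"
  shows "xor r c < 2^(k+1)" "xor (xor r c) c = r"
    "bit (xor r c) n \<longleftrightarrow> (bit r n \<noteq> bit c n)"
proof -
  show b: "\<And>n. bit (xor r c) n \<longleftrightarrow> (bit r n \<noteq> bit c n)" by (simp add: bit_xor_iff)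
  show "xor r c < 2^(k+1)" using assms b unfolding lt_pow_bits by auto
  show "xor (xor r c) c = r" by (rule bit_eqI) (auto simp: bit_xor_iff)
qed

lemma mask_lt: "mask (k+1) < (2::nat)^(k+1)" "2 * mask k < (2::nat)^(k+1)"
  by (simp_all add: mask_nat_def)

lemma bit_mask2: "bit (2 * mask k :: nat) n \<longleftrightarrow> 0 < n \<and> n \<le> k"
  by (auto simp: bit_double_iff bit_mask_iff)

definition half :: "nat ring \<Rightarrow> nat" where "half R = inv\<^bsub>R\<^esub> (\<one>\<^bsub>R\<^esub> \<oplus>\<^bsub>R\<^esub> \<one>\<^bsub>R\<^esub>)"
definition aa :: "nat ring \<Rightarrow> (nat \<Rightarrow> nat) \<Rightarrow> nat \<Rightarrow> nat" where
  "aa R t i = (t i \<ominus>\<^bsub>R\<^esub> inv\<^bsub>R\<^esub> t i) \<otimes>\<^bsub>R\<^esub> half R"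
definition bb :: "nat ring \<Rightarrow> (nat \<Rightarrow> nat) \<Rightarrow> nat \<Rightarrow> nat" where
  "bb R t i = (t i \<oplus>\<^bsub>R\<^esub> inv\<^bsub>R\<^esub> t i) \<otimes>\<^bsub>R\<^esub> half R"

locale RC = field R for R :: "nat ring" (structure) +
  fixes k :: nat and t :: "nat \<Rightarrow> nat"
  assumes k1: "1 \<le> k"
  and t_carr: "\<And>i. i \<in> {1..k} \<Longrightarrow> t i \<in> carrier R"
  and t_nz: "\<And>i. i \<in> {1..k} \<Longrightarrow> t i \<noteq> \<zero>"
  and t_sq: "\<And>i. i \<in> {1..k} \<Longrightarrow> t i \<otimes> t i \<noteq> \<one>"
  and t_dist: "\<And>i j. i \<in> {1..k} \<Longrightarrow> j \<in> {1..k} \<Longrightarrow> i \<noteq> j \<Longrightarrow> t i \<noteq> t j"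
  and t_prod: "\<And>i j. i \<in> {1..k} \<Longrightarrow> j \<in> {1..k} \<Longrightarrow> i \<noteq> j \<Longrightarrow> t i \<otimes> t j \<noteq> \<one>"
  and two_nz: "\<one> \<oplus> \<one> \<noteq> \<zero>"
begin

lemma unitI: "x \<in> carrier R \<Longrightarrow> x \<noteq> \<zero> \<Longrightarrow> x \<in> Units R"
  using field_Units by auto

lemma inv_facts:
  assumes "x \<in> carrier R" "x \<noteq> \<zero>"
  shows "inv x \<in> carrier R" "x \<otimes> inv x = \<one>" "inv x \<otimes> x = \<one>"
  using unitI[OF assms] by auto

lemma half_facts: "half R \<in> carrier R" "half R \<otimes> (\<one> \<oplus> \<one>) = \<one>"
  using inv_facts[of "\<one> \<oplus> \<one>"] two_nz unfolding half_def by auto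

lemma v_facts:
  assumes "i \<in> {1..k}"
  shows "inv (t i) \<in> carrier R" "t i \<otimes> inv (t i) = \<one>" "inv (t i) \<noteq> \<zero>"
proof -
  show c: "inv (t i) \<in> carrier R" and e: "t i \<otimes> inv (t i) = \<one>"
    using inv_facts[OF t_carr[OF assms] t_nz[OF assms]] by auto
  show "inv (t i) \<noteq> \<zero>"
  proof
    assume "inv (t i) = \<zero>"
    then have "t i \<otimes> inv (t i) = \<zero>" using t_carr[OF assms] by simp
    then show False using e by simp
  qed
qed

lemma aa_carr: "i \<in> {1..k} \<Longrightarrow> aa R t i \<in> carrier R"
  unfolding aa_def using t_carr v_facts half_facts by auto
lemma bb_carr: "i \<in> {1..k} \<Longrightarrow> bb R t i \<in> carrier R"
  unfolding bb_def using t_carr v_facts half_facts by auto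

lemma ab_rel:
  assumes i: "i \<in> {1..k}"
  shows "(aa R t i \<otimes> aa R t i) \<ominus> (bb R t i \<otimes> bb R t i) = \<ominus> \<one>"
proof -
  define x where "x = t i"
  define v where "v = inv (t i)"
  define h where "h = half R"
  have xc: "x \<in> carrier R" and vc: "v \<in> carrier R" and xv: "x \<otimes> v = \<one>"
    using t_carr[OF i] v_facts[OF i] unfolding x_def v_def by auto
  have hc: "h \<in> carrier R" and h2: "h \<otimes> (\<one> \<oplus> \<one>) = \<one>" using half_facts unfolding h_def by auto
  have "(aa R t i \<otimes> aa R t i) \<ominus> (bb R t i \<otimes> bb R t i)
      = ((x \<ominus> v) \<otimes> h) \<otimes> ((x \<ominus> v) \<otimes> h) \<ominus> ((x \<oplus> v) \<otimes> h) \<otimes> ((x \<oplus> v) \<otimes> h)"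
    unfolding aa_def bb_def x_def v_def h_def ..
  also have "\<dots> = \<ominus> ((x \<otimes> v) \<otimes> (h \<otimes> (\<one> \<oplus> \<one>)) \<otimes> (h \<otimes> (\<one> \<oplus> \<one>)))"
    using xc vc hc by algebra
  also have "\<dots> = \<ominus> \<one>" using xv h2 by simp
  finally show ?thesis .
qed

definition lam :: "nat \<Rightarrow> nat \<Rightarrow> nat" where
  "lam i r = (aa R t i \<otimes> Xdiag R (2^(k+1)) i r) \<oplus> (bb R t i \<otimes> Xdiag R (2^(k+1)) (k+1) r) \<oplus> \<one>"

definition u :: "nat \<Rightarrow> nat \<Rightarrow> nat" where
  "u i r = (if bit r (k+1-i) = bit r 0 then t i else inv (t i))"

lemma lam_char:
  assumes i: "i \<in> {1..k}"
  shows "lam i r = (if bit r 0 then \<one> \<ominus> u i r else \<one> \<oplus> u i r)"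
proof -
  define x where "x = t i"
  define v where "v = inv (t i)"
  define h where "h = half R"
  have xc: "x \<in> carrier R" and vc: "v \<in> carrier R" and xv: "x \<otimes> v = \<one>"
    using t_carr[OF i] v_facts[OF i] unfolding x_def v_def by auto
  have hc: "h \<in> carrier R" and h2: "h \<otimes> (\<one> \<oplus> \<one>) = \<one>" using half_facts unfolding h_def by auto
  have X1: "Xdiag R (2^(k+1)) i r = (if bit r (k+1-i) then \<ominus> \<one> else \<one>)"
    using i by (intro Xdiag_bit) auto
  have X2: "Xdiag R (2^(k+1)) (k+1) r = (if bit r 0 then \<ominus> \<one> else \<one>)"
    using Xdiag_bit[of "k+1" k R r] by simp
  have L: "lam i r = (((x \<ominus> v) \<otimes> h) \<otimes> (if bit r (k+1-i) then \<ominus> \<one> else \<one>)) \<oplus>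
                     (((x \<oplus> v) \<otimes> h) \<otimes> (if bit r 0 then \<ominus> \<one> else \<one>)) \<oplus> \<one>"
    unfolding lam_def X1 X2 aa_def bb_def x_def v_def h_def ..
  show ?thesis
  proof (cases "bit r 0"; cases "bit r (k+1-i)")
    assume b0: "bit r 0" and b1: "bit r (k+1-i)"
    have "lam i r = \<one> \<ominus> x \<otimes> (h \<otimes> (\<one> \<oplus> \<one>))" unfolding L using b0 b1 xc vc hc by simp algebra
    then show ?thesis using b0 b1 h2 xc unfolding u_def x_def by simp
  next
    assume b0: "bit r 0" and b1: "\<not> bit r (k+1-i)"
    have "lam i r = \<one> \<ominus> v \<otimes> (h \<otimes> (\<one> \<oplus> \<one>))" unfolding L using b0 b1 xc vc hc by simp algebra
    then show ?thesis using b0 b1 h2 vc unfolding u_def v_def by simp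
  next
    assume b0: "\<not> bit r 0" and b1: "bit r (k+1-i)"
    have "lam i r = \<one> \<oplus> v \<otimes> (h \<otimes> (\<one> \<oplus> \<one>))" unfolding L using b0 b1 xc vc hc by simp algebra
    then show ?thesis using b0 b1 h2 vc unfolding u_def v_def by simp
  next
    assume b0: "\<not> bit r 0" and b1: "\<not> bit r (k+1-i)"
    have "lam i r = \<one> \<oplus> x \<otimes> (h \<otimes> (\<one> \<oplus> \<one>))" unfolding L using b0 b1 xc vc hc by simp algebra
    then show ?thesis using b0 b1 h2 xc unfolding u_def x_def by simp
  qed
qed


lemma u_carr: "i \<in> {1..k} \<Longrightarrow> u i r \<in> carrier R"
  unfolding u_def using t_carr v_facts by auto

lemma vv_sq: assumes i: "i \<in> {1..k}" shows "inv (t i) \<otimes> inv (t i) \<noteq> \<one>"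
proof
  assume H: "inv (t i) \<otimes> inv (t i) = \<one>"
  have xc: "t i \<in> carrier R" and vc: "inv (t i) \<in> carrier R" and xv: "t i \<otimes> inv (t i) = \<one>"
    using t_carr[OF i] v_facts[OF i] by auto
  have "t i \<otimes> t i = (t i \<otimes> t i) \<otimes> (inv (t i) \<otimes> inv (t i))" using H xc by simp
  also have "\<dots> = (t i \<otimes> inv (t i)) \<otimes> (t i \<otimes> inv (t i))" using xc vc by algebra
  also have "\<dots> = \<one>" using xv by simp
  finally show False using t_sq[OF i] by simp
qed

lemma u_sq: "i \<in> {1..k} \<Longrightarrow> u i r \<otimes> u i r \<noteq> \<one>"
  unfolding u_def using t_sq vv_sq by auto

lemma pm_nz:
  assumes wc: "w \<in> carrier R" and ww: "w \<otimes> w \<noteq> \<one>"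
  shows "\<one> \<oplus> w \<noteq> \<zero>" "\<one> \<ominus> w \<noteq> \<zero>"
proof -
  have P: "(\<one> \<oplus> w) \<otimes> (\<one> \<ominus> w) = \<one> \<ominus> w \<otimes> w" using wc by algebra
  have Q: "\<one> \<ominus> w \<otimes> w \<noteq> \<zero>" using ww wc r_right_minus_eq[of "\<one>" "w \<otimes> w"] by auto
  show "\<one> \<oplus> w \<noteq> \<zero>"
  proof
    assume "\<one> \<oplus> w = \<zero>"
    then have "\<one> \<ominus> w \<otimes> w = \<zero> \<otimes> (\<one> \<ominus> w)" using P by simp
    then show False using Q wc by simp
  qed
  show "\<one> \<ominus> w \<noteq> \<zero>"
  proof
    assume "\<one> \<ominus> w = \<zero>"
    then have "\<one> \<ominus> w \<otimes> w = (\<one> \<oplus> w) \<otimes> \<zero>" using P by simp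
    then show False using Q wc by simp
  qed
qed

lemma lam_carr: "i \<in> {1..k} \<Longrightarrow> lam i r \<in> carrier R"
  using lam_char[of i r] u_carr[of i r] by auto

lemma lam_nz: "i \<in> {1..k} \<Longrightarrow> lam i r \<noteq> \<zero>"
  using lam_char[of i r] pm_nz[OF u_carr[of i r] u_sq[of i r]] by auto

lemma one_minus_cancel: "a \<in> carrier R \<Longrightarrow> b \<in> carrier R \<Longrightarrow> \<one> \<ominus> a = \<one> \<ominus> b \<Longrightarrow> a = b"
proof -
  assume c: "a \<in> carrier R" "b \<in> carrier R" and e: "\<one> \<ominus> a = \<one> \<ominus> b"
  have "a = \<one> \<ominus> (\<one> \<ominus> a)" using c by algebra
  also have "\<dots> = \<one> \<ominus> (\<one> \<ominus> b)" using e by simp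
  also have "\<dots> = b" using c by algebra
  finally show "a = b" .
qed

lemma one_plus_cancel: "a \<in> carrier R \<Longrightarrow> b \<in> carrier R \<Longrightarrow> \<one> \<oplus> a = \<one> \<oplus> b \<Longrightarrow> a = b"
proof -
  assume c: "a \<in> carrier R" "b \<in> carrier R" and e: "\<one> \<oplus> a = \<one> \<oplus> b"
  have "a = (\<one> \<oplus> a) \<ominus> \<one>" using c by algebra
  also have "\<dots> = (\<one> \<oplus> b) \<ominus> \<one>" using e by simp
  also have "\<dots> = b" using c by algebra
  finally show "a = b" .
qed

lemma u_dist:
  assumes i: "i \<in> {1..k}" and j: "j \<in> {1..k}" and ij: "i \<noteq> j"
  shows "u i r \<noteq> u j r"
proof -
  have ti: "t i \<in> carrier R" "t i \<otimes> inv (t i) = \<one>" "inv (t i) \<in> carrier R"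
    and tj: "t j \<in> carrier R" "t j \<otimes> inv (t j) = \<one>" "inv (t j) \<in> carrier R"
    using t_carr v_facts i j by auto
  have ui: "inv (inv (t i)) = t i" using unitI[OF ti(1) t_nz[OF i]] by simp
  have uj: "inv (inv (t j)) = t j" using unitI[OF tj(1) t_nz[OF j]] by simp
  have A: "t i \<noteq> t j" using t_dist[OF i j ij] .
  have B: "t i \<noteq> inv (t j)"
  proof
    assume "t i = inv (t j)"
    then have "t i \<otimes> t j = \<one>" using tj m_comm by auto
    then show False using t_prod[OF i j ij] by simp
  qed
  have C: "inv (t i) \<noteq> t j"
  proof
    assume "inv (t i) = t j"
    then have "t i \<otimes> t j = \<one>" using ti by auto
    then show False using t_prod[OF i j ij] by simp
  qed
  have D: "inv (t i) \<noteq> inv (t j)" using A ui uj by metis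
  show ?thesis unfolding u_def using A B C D by auto
qed

lemma lam_dist:
  assumes i: "i \<in> {1..k}" and j: "j \<in> {1..k}" and ij: "i \<noteq> j"
  shows "lam i r \<noteq> lam j r"
  using lam_char[OF i, of r] lam_char[OF j, of r] u_dist[OF i j ij, of r]
    one_minus_cancel[OF u_carr[OF i] u_carr[OF j]] one_plus_cancel[OF u_carr[OF i] u_carr[OF j]]
  by (auto split: if_splits)

lemma lam_cong:
  assumes "i \<in> {1..k}" "bit r (k+1-i) = bit r' (k+1-i)" "bit r 0 = bit r' 0"
  shows "lam i r = lam i r'"
  using lam_char[of i r] lam_char[of i r'] assms unfolding u_def by simp

lemma t_ne_v: assumes i: "i \<in> {1..k}" shows "t i \<noteq> inv (t i)"
proof
  assume "t i = inv (t i)"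
  then have "t i \<otimes> t i = \<one>" using v_facts[OF i] by simp
  then show False using t_sq[OF i] by simp
qed

lemma lam_sys:
  assumes i: "i \<in> {1..k}" and "bit r (k+1-i) \<noteq> bit r' (k+1-i)" "bit r 0 = bit r' 0"
  shows "lam i r \<noteq> lam i r'"
proof -
  have "u i r \<noteq> u i r'" using assms t_ne_v[OF i] unfolding u_def by auto
  then show ?thesis
    using lam_char[OF i, of r] lam_char[OF i, of r'] assms(3)
      one_minus_cancel[OF u_carr[OF i] u_carr[OF i]] one_plus_cancel[OF u_carr[OF i] u_carr[OF i]]
    by (auto split: if_splits)
qed

lemma lam_par1:
  assumes i: "i \<in> {1..k}" and "bit r (k+1-i) \<noteq> bit r' (k+1-i)" "bit r 0 \<noteq> bit r' 0"
  shows "lam i r \<oplus> lam i r' = \<one> \<oplus> \<one>"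
proof -
  have ue: "u i r' = u i r" using assms unfolding u_def by auto
  have uc: "u i r \<in> carrier R" using u_carr[OF i] .
  have "(\<one> \<ominus> u i r) \<oplus> (\<one> \<oplus> u i r) = \<one> \<oplus> \<one>" "(\<one> \<oplus> u i r) \<oplus> (\<one> \<ominus> u i r) = \<one> \<oplus> \<one>"
    using uc by algebra+
  then show ?thesis using lam_char[OF i, of r] lam_char[OF i, of r'] ue assms(3) by auto
qed

lemma inv_sum_one:
  assumes A: "A \<in> carrier R" "A \<noteq> \<zero>" and B: "B \<in> carrier R" "B \<noteq> \<zero>" and e: "A \<oplus> B = A \<otimes> B"
  shows "inv A \<oplus> inv B = \<one>"
proof -
  have ia: "inv A \<in> carrier R" "inv A \<otimes> A = \<one>" using inv_facts[OF A] by auto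
  have ib: "inv B \<in> carrier R" "inv B \<otimes> B = \<one>" using inv_facts[OF B] by auto
  have c: "inv A \<otimes> inv B \<in> carrier R" using ia ib by simp
  have 1: "inv A = (inv A \<otimes> inv B) \<otimes> B"
  proof -
    have "(inv A \<otimes> inv B) \<otimes> B = inv A \<otimes> (inv B \<otimes> B)" using ia(1) ib(1) B(1) by algebra
    then show ?thesis using ib(2) ia(1) by (metis r_one)
  qed
  have 2: "inv B = (inv A \<otimes> inv B) \<otimes> A"
  proof -
    have "(inv A \<otimes> inv B) \<otimes> A = inv B \<otimes> (inv A \<otimes> A)" using ia(1) ib(1) A(1) by algebra
    then show ?thesis using ia(2) ib(1) by (metis r_one)
  qed
  have "inv A \<oplus> inv B = (inv A \<otimes> inv B) \<otimes> (A \<oplus> B)"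
    proof -
    have "(inv A \<otimes> inv B) \<otimes> (A \<oplus> B) = (inv A \<otimes> inv B) \<otimes> A \<oplus> (inv A \<otimes> inv B) \<otimes> B"
      using c A(1) B(1) by (simp add: r_distr)
    also have "\<dots> = inv B \<oplus> inv A" using 1 2 by simp
    also have "\<dots> = inv A \<oplus> inv B" using ia(1) ib(1) by (simp add: add.m_comm)
    finally show ?thesis by simp
  qed
  also have "\<dots> = (inv A \<otimes> inv B) \<otimes> (A \<otimes> B)" using e by simp
  also have "\<dots> = (inv A \<otimes> A) \<otimes> (inv B \<otimes> B)" using A(1) B(1) ia(1) ib(1) by algebra
  also have "\<dots> = \<one>" using ia ib by simp
  finally show ?thesis .
qed

lemma lam_par2:
  assumes i: "i \<in> {1..k}" and "bit r (k+1-i) \<noteq> bit r' (k+1-i)" "bit r 0 = bit r' 0"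
  shows "inv (lam i r) \<oplus> inv (lam i r') = \<one>"
proof -
  have uu: "u i r \<otimes> u i r' = \<one>" using assms v_facts[OF i] t_carr[OF i] m_comm unfolding u_def by auto
  have uc: "u i r \<in> carrier R" "u i r' \<in> carrier R" using u_carr[OF i] by auto
  have e1: "(\<one> \<ominus> u i r) \<oplus> (\<one> \<ominus> u i r') = (\<one> \<ominus> u i r) \<otimes> (\<one> \<ominus> u i r')"
  proof -
    have "(\<one> \<ominus> u i r) \<otimes> (\<one> \<ominus> u i r') = ((\<one> \<ominus> u i r) \<oplus> (\<one> \<ominus> u i r')) \<ominus> \<one> \<oplus> u i r \<otimes> u i r'"
      using uc by algebra
    also have "\<dots> = (\<one> \<ominus> u i r) \<oplus> (\<one> \<ominus> u i r')" using uu uc by simp algebra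
    finally show ?thesis by simp
  qed
  have e2: "(\<one> \<oplus> u i r) \<oplus> (\<one> \<oplus> u i r') = (\<one> \<oplus> u i r) \<otimes> (\<one> \<oplus> u i r')"
  proof -
    have "(\<one> \<oplus> u i r) \<otimes> (\<one> \<oplus> u i r') = ((\<one> \<oplus> u i r) \<oplus> (\<one> \<oplus> u i r')) \<ominus> \<one> \<oplus> u i r \<otimes> u i r'"
      using uc by algebra
    also have "\<dots> = (\<one> \<oplus> u i r) \<oplus> (\<one> \<oplus> u i r')" using uu uc by simp algebra
    finally show ?thesis by simp
  qed
  have "lam i r \<oplus> lam i r' = lam i r \<otimes> lam i r'"
    using lam_char[OF i, of r] lam_char[OF i, of r'] assms(3) e1 e2 by auto
  then show ?thesis using inv_sum_one lam_carr[OF i] lam_nz[OF i] by blast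
qed

end

context RC begin

abbreviation NN where "NN \<equiv> (2::nat)^(k+1)"
abbreviation AK where "AK \<equiv> coding_mats R k NN (aa R t) (bb R t)"
abbreviation nc where "nc \<equiv> node_content R k NN AK"

lemma file_carr: "is_file R k NN f \<Longrightarrow> i \<in> {1..k} \<Longrightarrow> r < NN \<Longrightarrow> f i r \<in> carrier R"
  unfolding is_file_def by auto

lemma diagAK: "AK i c r = (if c = r then lam i c else \<zero>)"
  unfolding coding_mats_def lam_def by simp

lemma matT_lam:
  assumes i: "i \<in> {1..k}" and r: "r < NN" and v: "\<And>c. c < NN \<Longrightarrow> v c \<in> carrier R"
  shows "matT_vec R NN (AK i) v r = lam i r \<otimes> v r"
proof -
  have "matT_vec R NN (AK i) v r = (\<Oplus>c\<in>{..<NN}. (if r = c then lam i r \<otimes> v r else \<zero>))"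
    unfolding matT_vec_def diagAK
    by (rule finsum_cong) (use lam_carr[OF i] v r in \<open>auto simp: simp_implies_def\<close>)
  also have "\<dots> = lam i r \<otimes> v r"
    using finsum_singleton[of r "{..<NN}" "\<lambda>_. lam i r \<otimes> v r"] r lam_carr[OF i] v[OF r] by auto
  finally show ?thesis .
qed

lemma nc_sys: "j \<in> {1..k} \<Longrightarrow> nc j f r = f j r"
  unfolding node_content_def by simp

lemma nc_p1: "nc (k+1) f r = (\<Oplus>i\<in>{1..k}. f i r)"
  unfolding node_content_def by simp

lemma nc_p2:
  assumes f: "is_file R k NN f" and r: "r < NN"
  shows "nc (k+2) f r = (\<Oplus>i\<in>{1..k}. lam i r \<otimes> f i r)"
proof -
  have "nc (k+2) f r = (\<Oplus>i\<in>{1..k}. matT_vec R NN (AK i) (f i) r)"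
    unfolding node_content_def by simp
  also have "\<dots> = (\<Oplus>i\<in>{1..k}. lam i r \<otimes> f i r)"
    by (rule finsum_cong) (use f r lam_carr file_carr matT_lam in auto)
  finally show ?thesis .
qed

lemma nc_carr:
  assumes f: "is_file R k NN f" and r: "r < NN" and j: "j \<in> {1..k+2}"
  shows "nc j f r \<in> carrier R"
proof -
  have "j \<in> {1..k} \<or> j = k+1 \<or> j = k+2" using j by auto
  then show ?thesis
  proof (elim disjE)
    assume "j \<in> {1..k}" then show ?thesis using nc_sys file_carr[OF f _ r] by simp
  next
    assume "j = k+1" then show ?thesis using nc_p1 file_carr[OF f _ r] by (simp add: finsum_closed)
  next
    assume "j = k+2" then show ?thesis
      using nc_p2[OF f r] file_carr[OF f _ r] lam_carr by (auto intro!: finsum_closed)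
  qed
qed

lemma add_rcancel: "a \<in> carrier R \<Longrightarrow> b \<in> carrier R \<Longrightarrow> s \<in> carrier R \<Longrightarrow> a \<oplus> s = b \<oplus> s \<Longrightarrow> a = b"
proof -
  assume c: "a \<in> carrier R" "b \<in> carrier R" "s \<in> carrier R" and e: "a \<oplus> s = b \<oplus> s"
  have "a = (a \<oplus> s) \<ominus> s" using c by algebra
  also have "\<dots> = (b \<oplus> s) \<ominus> s" using e by simp
  also have "\<dots> = b" using c by algebra
  finally show ?thesis .
qed

lemma sum_part_eq:
  assumes fin: "finite I" and K: "K \<subseteq> I"
    and g: "g \<in> I \<rightarrow> carrier R" and g': "g' \<in> I \<rightarrow> carrier R"
    and eq: "finsum R g I = finsum R g' I" and oth: "\<And>x. x \<in> I - K \<Longrightarrow> g x = g' x"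
  shows "finsum R g K = finsum R g' K"
proof -
  have IU: "I = K \<union> (I - K)" using K by auto
  have fK: "finite K" using fin K finite_subset by auto
  have gK: "g \<in> K \<rightarrow> carrier R" "g' \<in> K \<rightarrow> carrier R" using g g' K by auto
  have gR: "g \<in> I - K \<rightarrow> carrier R" "g' \<in> I - K \<rightarrow> carrier R" using g g' by auto
  have s1: "finsum R g I = finsum R g K \<oplus> finsum R g (I - K)"
    using finsum_Un_disjoint[OF fK _ _ gK(1) gR(1)] fin IU by (metis Diff_disjoint finite_Diff)
  have s2: "finsum R g' I = finsum R g' K \<oplus> finsum R g' (I - K)"
    using finsum_Un_disjoint[OF fK _ _ gK(2) gR(2)] fin IU by (metis Diff_disjoint finite_Diff)
  have s3: "finsum R g (I - K) = finsum R g' (I - K)"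
    by (rule finsum_cong) (use gR oth in auto)
  show ?thesis
    using add_rcancel[of "finsum R g K" "finsum R g' K" "finsum R g' (I - K)"]
      s1 s2 s3 eq gK gR by (simp add: finsum_closed)
qed

lemma finsum_one: "g j \<in> carrier R \<Longrightarrow> finsum R g {j} = g j"
  using finsum_insert[of "{}" j g] by simp

lemma finsum_two: "j \<noteq> j' \<Longrightarrow> g j \<in> carrier R \<Longrightarrow> g j' \<in> carrier R \<Longrightarrow> finsum R g {j, j'} = g j \<oplus> g j'"
  using finsum_insert[of "{j'}" j g] finsum_one[of g j'] by simp

lemma lin2:
  assumes c: "x1 \<in> carrier R" "x2 \<in> carrier R" "y1 \<in> carrier R" "y2 \<in> carrier R"
    "l1 \<in> carrier R" "l2 \<in> carrier R"
    and e1: "x1 \<oplus> x2 = y1 \<oplus> y2" and e2: "l1 \<otimes> x1 \<oplus> l2 \<otimes> x2 = l1 \<otimes> y1 \<oplus> l2 \<otimes> y2"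
    and ne: "l1 \<noteq> l2"
  shows "x1 = y1 \<and> x2 = y2"
proof -
  have "(l1 \<ominus> l2) \<otimes> (x1 \<ominus> y1) = ((l1 \<otimes> x1 \<oplus> l2 \<otimes> x2) \<ominus> (l1 \<otimes> y1 \<oplus> l2 \<otimes> y2)) \<ominus> l2 \<otimes> ((x1 \<oplus> x2) \<ominus> (y1 \<oplus> y2))"
    using c by algebra
  also have "\<dots> = \<zero>" using e1 e2 c by simp algebra
  finally have z: "(l1 \<ominus> l2) \<otimes> (x1 \<ominus> y1) = \<zero>" .
  have "l1 \<ominus> l2 \<noteq> \<zero>" using ne c r_right_minus_eq by auto
  then have "x1 \<ominus> y1 = \<zero>" using z integral[of "l1 \<ominus> l2" "x1 \<ominus> y1"] c by auto
  then have 1: "x1 = y1" using c r_right_minus_eq by auto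
  have "x2 = (x1 \<oplus> x2) \<ominus> x1" using c by algebra
  also have "\<dots> = (y1 \<oplus> y2) \<ominus> y1" using e1 1 by simp
  also have "\<dots> = y2" using c by algebra
  finally show ?thesis using 1 by simp
qed

end

context RC begin

lemma mds_pos:
  assumes S: "S \<subseteq> {1..k+2}" "card S = k"
    and f: "is_file R k NN f" and f': "is_file R k NN f'" and r: "r < NN"
    and eqS: "\<And>j. j \<in> S \<Longrightarrow> nc j f r = nc j f' r"
    and i: "i \<in> {1..k}"
  shows "f i r = f' i r"
proof (cases "i \<in> S")
  case True
  then show ?thesis using eqS[OF True] nc_sys[OF i] by simp
next
  case False
  define J where "J = {1..k} - S"
  have iJ: "i \<in> J" using i False J_def by auto
  have finS: "finite S" using S finite_subset by blast
  have c1: "card S = card (S \<inter> {1..k}) + card (S \<inter> {k+1,k+2})"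
  proof -
    have "S = (S \<inter> {1..k}) \<union> (S \<inter> {k+1,k+2})" using S(1) by auto
    moreover have "(S \<inter> {1..k}) \<inter> (S \<inter> {k+1,k+2}) = {}" by auto
    ultimately show ?thesis using card_Un_disjoint[of "S \<inter> {1..k}" "S \<inter> {k+1,k+2}"] finS
      by (metis finite_Int)
  qed
  have c2: "k = card (S \<inter> {1..k}) + card J"
  proof -
    have "{1..k} = (S \<inter> {1..k}) \<union> J" unfolding J_def by auto
    moreover have "(S \<inter> {1..k}) \<inter> J = {}" unfolding J_def by auto
    ultimately show ?thesis using card_Un_disjoint[of "S \<inter> {1..k}" J] unfolding J_def
      by (metis card_atLeastAtMost diff_Suc_1 finite_Diff finite_Int finite_atLeastAtMost)
  qed
  have cJ: "card J = card (S \<inter> {k+1,k+2})" using c1 c2 S(2) by simp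
  have finJ: "finite J" unfolding J_def by auto
  have oth: "\<And>j. j \<in> {1..k} - J \<Longrightarrow> f j r = f' j r"
  proof -
    fix j assume "j \<in> {1..k} - J"
    then have j: "j \<in> {1..k}" "j \<in> S" unfolding J_def by auto
    show "f j r = f' j r" using eqS[OF j(2)] nc_sys[OF j(1), of f r] nc_sys[OF j(1), of f' r] by simp
  qed
  have fr: "(\<lambda>j. f j r) \<in> {1..k} \<rightarrow> carrier R" "(\<lambda>j. f' j r) \<in> {1..k} \<rightarrow> carrier R"
    using file_carr[OF f _ r] file_carr[OF f' _ r] by auto
  have lfr: "(\<lambda>j. lam j r \<otimes> f j r) \<in> {1..k} \<rightarrow> carrier R" "(\<lambda>j. lam j r \<otimes> f' j r) \<in> {1..k} \<rightarrow> carrier R"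
    using file_carr[OF f _ r] file_carr[OF f' _ r] lam_carr by auto
  have Jsub: "J \<subseteq> {1..k}" unfolding J_def by auto
  have sum1: "k+1 \<in> S \<Longrightarrow> finsum R (\<lambda>j. f j r) J = finsum R (\<lambda>j. f' j r) J"
    by (rule sum_part_eq[OF _ Jsub fr]) (use eqS[of "k+1"] nc_p1 oth in auto)
  have sum2: "k+2 \<in> S \<Longrightarrow> finsum R (\<lambda>j. lam j r \<otimes> f j r) J = finsum R (\<lambda>j. lam j r \<otimes> f' j r) J"
    by (rule sum_part_eq[OF _ Jsub lfr]) (use eqS[of "k+2"] nc_p2[OF f r] nc_p2[OF f' r] oth in auto)
  have ic: "f i r \<in> carrier R" "f' i r \<in> carrier R" "lam i r \<in> carrier R"
    using file_carr[OF f i r] file_carr[OF f' i r] lam_carr[OF i] by auto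
  have ne: "S \<inter> {k+1,k+2} \<noteq> {}"
  proof
    assume "S \<inter> {k+1,k+2} = {}"
    then have "card J = 0" using cJ by simp
    then show False using iJ finJ by auto
  qed
  then consider (both) "k+1 \<in> S" "k+2 \<in> S" | (one) "k+1 \<in> S" "k+2 \<notin> S" | (two) "k+1 \<notin> S" "k+2 \<in> S"
    by (cases "k+1 \<in> S"; cases "k+2 \<in> S") auto
  then show ?thesis
  proof cases
    case both
    then have "S \<inter> {k+1,k+2} = {k+1,k+2}" by auto
    then have "card J = 2" using cJ by simp
    then obtain i' where J2: "J = {i, i'}" "i' \<noteq> i"
      using iJ by (metis card_2_iff insert_commute insert_iff singletonD)
    have i': "i' \<in> {1..k}" using J2 Jsub by auto
    have ic': "f i' r \<in> carrier R" "f' i' r \<in> carrier R" "lam i' r \<in> carrier R"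
      using file_carr[OF f i' r] file_carr[OF f' i' r] lam_carr[OF i'] by auto
    have e1: "f i r \<oplus> f i' r = f' i r \<oplus> f' i' r"
      using sum1[OF both(1)] finsum_two[of i i' "\<lambda>j. f j r"] finsum_two[of i i' "\<lambda>j. f' j r"] J2 ic ic' by auto
    have e2: "lam i r \<otimes> f i r \<oplus> lam i' r \<otimes> f i' r = lam i r \<otimes> f' i r \<oplus> lam i' r \<otimes> f' i' r"
      using sum2[OF both(2)] finsum_two[of i i' "\<lambda>j. lam j r \<otimes> f j r"]
        finsum_two[of i i' "\<lambda>j. lam j r \<otimes> f' j r"] J2 ic ic' by auto
    show ?thesis using lin2[OF ic(1) ic'(1) ic(2) ic'(2) ic(3) ic'(3) e1 e2] lam_dist[OF i i'] J2 by auto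
  next
    case one
    then have "S \<inter> {k+1,k+2} = {k+1}" by auto
    then have "card J = 1" using cJ by simp
    then have J1: "J = {i}" using iJ by (metis card_1_singletonE singletonD)
    show ?thesis using sum1[OF one(1)] J1 finsum_one[of "\<lambda>j. f j r" i] finsum_one[of "\<lambda>j. f' j r" i] ic by simp
  next
    case two
    then have "S \<inter> {k+1,k+2} = {k+2}" by auto
    then have "card J = 1" using cJ by simp
    then have J1: "J = {i}" using iJ by (metis card_1_singletonE singletonD)
    have "lam i r \<otimes> f i r = lam i r \<otimes> f' i r"
      using sum2[OF two(2)] J1 finsum_one[of "\<lambda>j. lam j r \<otimes> f j r" i] finsum_one[of "\<lambda>j. lam j r \<otimes> f' j r" i] ic by simp
    then show ?thesis using m_lcancel[OF lam_nz[OF i] ic(3) ic(1) ic(2)] by simp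
  qed
qed

lemma MDS: "is_MDS_code R k NN AK"
  unfolding is_MDS_code_def
  using mds_pos by blast

end

context RC begin

lemma pair_sum:
  assumes r: "r < NN" "r' < NN" "r \<noteq> r'" and ab: "\<alpha> \<in> carrier R" "\<beta> \<in> carrier R"
    and x: "\<And>c. c < NN \<Longrightarrow> x c \<in> carrier R"
  shows "(\<Oplus>c\<in>{..<NN}. (if c = r then \<alpha> else if c = r' then \<beta> else \<zero>) \<otimes> x c) = \<alpha> \<otimes> x r \<oplus> \<beta> \<otimes> x r'"
proof -
  have "(\<Oplus>c\<in>{..<NN}. (if c = r then \<alpha> else if c = r' then \<beta> else \<zero>) \<otimes> x c)
      = (\<Oplus>c\<in>{..<NN}. (if r = c then \<alpha> \<otimes> x r else \<zero>) \<oplus> (if r' = c then \<beta> \<otimes> x r' else \<zero>))"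
    by (rule finsum_cong) (use r ab x in \<open>auto simp: simp_implies_def\<close>)
  also have "\<dots> = (\<Oplus>c\<in>{..<NN}. (if r = c then \<alpha> \<otimes> x r else \<zero>)) \<oplus> (\<Oplus>c\<in>{..<NN}. (if r' = c then \<beta> \<otimes> x r' else \<zero>))"
    by (rule finsum_addf) (use r ab x in auto)
  also have "\<dots> = \<alpha> \<otimes> x r \<oplus> \<beta> \<otimes> x r'"
    using finsum_singleton[of r "{..<NN}" "\<lambda>_. \<alpha> \<otimes> x r"] finsum_singleton[of r' "{..<NN}" "\<lambda>_. \<beta> \<otimes> x r'"]
      r ab x by auto
  finally show ?thesis .
qed

lemma repair_frame:
  fixes j :: nat and \<rho> :: "nat \<Rightarrow> nat" and P :: "nat \<Rightarrow> bool" and \<alpha> \<beta> :: "nat \<Rightarrow> nat \<Rightarrow> nat"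
  assumes j: "j \<in> {1..k+2}"
    and rl: "\<And>r. r < NN \<Longrightarrow> \<rho> r < NN"
    and ri: "\<And>r. r < NN \<Longrightarrow> \<rho> (\<rho> r) = r"
    and rp: "\<And>r. r < NN \<Longrightarrow> P (\<rho> r) \<longleftrightarrow> \<not> P r"
    and abc: "\<And>i r. i \<in> {1..k+2} - {j} \<Longrightarrow> r < NN \<Longrightarrow> \<alpha> i r \<in> carrier R \<and> \<beta> i r \<in> carrier R"
    and key: "\<And>f f' r. is_file R k NN f \<Longrightarrow> is_file R k NN f' \<Longrightarrow> r < NN \<Longrightarrow> P r \<Longrightarrow>
       (\<forall>i\<in>{1..k+2} - {j}. \<alpha> i r \<otimes> nc i f r \<oplus> \<beta> i r \<otimes> nc i f (\<rho> r)
                          = \<alpha> i r \<otimes> nc i f' r \<oplus> \<beta> i r \<otimes> nc i f' (\<rho> r)) \<Longrightarrow>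
       nc j f r = nc j f' r \<and> nc j f (\<rho> r) = nc j f' (\<rho> r)"
  shows "\<exists>S :: nat \<Rightarrow> nat \<Rightarrow> nat \<Rightarrow> nat.
        (\<forall>i\<in>{1..k+2} - {j}. \<forall>s<NN div 2. \<forall>c<NN. S i s c \<in> carrier R) \<and>
        (\<forall>f f'. is_file R k NN f \<and> is_file R k NN f' \<and>
           (\<forall>i s. download R k NN AK j S f i s = download R k NN AK j S f' i s)
           \<longrightarrow> (\<forall>r<NN. nc j f r = nc j f' r))"
proof -
  obtain e where e1: "\<And>s. s < NN div 2 \<Longrightarrow> e s < NN \<and> P (e s)"
    and e2: "\<And>r. r < NN \<Longrightarrow> \<exists>s<NN div 2. r = e s \<or> r = \<rho> (e s)"
    using pair_enum[of NN \<rho> P, OF rl ri rp] by blast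
  define S where "S i s c = (if c = e s then \<alpha> i (e s) else if c = \<rho> (e s) then \<beta> i (e s) else \<zero>)" for i s c
  have dl: "download R k NN AK j S f i s = \<alpha> i (e s) \<otimes> nc i f (e s) \<oplus> \<beta> i (e s) \<otimes> nc i f (\<rho> (e s))"
    if f: "is_file R k NN f" and i: "i \<in> {1..k+2} - {j}" and s: "s < NN div 2" for f i s
  proof -
    have es: "e s < NN" "P (e s)" using e1[OF s] by auto
    have nes: "e s \<noteq> \<rho> (e s)" using rp[OF es(1)] es(2) by auto
    have "download R k NN AK j S f i s = (\<Oplus>c\<in>{..<NN}. S i s c \<otimes> nc i f c)"
      unfolding download_def using i s by simp
    also have "\<dots> = \<alpha> i (e s) \<otimes> nc i f (e s) \<oplus> \<beta> i (e s) \<otimes> nc i f (\<rho> (e s))"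
      unfolding S_def
      by (rule pair_sum) (use es rl nes abc[OF i] nc_carr[OF f] i in auto)
    finally show ?thesis .
  qed
  show ?thesis
  proof (rule exI[of _ S], intro conjI allI impI ballI)
    fix i s c assume i: "i \<in> {1..k+2} - {j}" and s: "s < NN div 2" and c: "c < NN"
    show "S i s c \<in> carrier R" unfolding S_def using abc[OF i] e1[OF s] rl by auto
  next
    fix f f' r
    assume H: "is_file R k NN f \<and> is_file R k NN f' \<and>
           (\<forall>i s. download R k NN AK j S f i s = download R k NN AK j S f' i s)"
      and r: "r < NN"
    then have f: "is_file R k NN f" and f': "is_file R k NN f'" by auto
    obtain s where s: "s < NN div 2" and rs: "r = e s \<or> r = \<rho> (e s)" using e2[OF r] by blast
    have es: "e s < NN" "P (e s)" using e1[OF s] by auto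
    have "\<forall>i\<in>{1..k+2} - {j}. \<alpha> i (e s) \<otimes> nc i f (e s) \<oplus> \<beta> i (e s) \<otimes> nc i f (\<rho> (e s))
                          = \<alpha> i (e s) \<otimes> nc i f' (e s) \<oplus> \<beta> i (e s) \<otimes> nc i f' (\<rho> (e s))"
      using H dl[OF f _ s] dl[OF f' _ s] by metis
    then have "nc j f (e s) = nc j f' (e s) \<and> nc j f (\<rho> (e s)) = nc j f' (\<rho> (e s))"
      using key[OF f f' es] by blast
    then show "nc j f r = nc j f' r" using rs by auto
  qed
qed

end

context RC begin

lemma sum3:
  assumes fin: "finite I" and x: "x \<in> I \<rightarrow> carrier R" and y: "y \<in> I \<rightarrow> carrier R"
    and z: "z \<in> I \<rightarrow> carrier R" and w: "w \<in> I \<rightarrow> carrier R" and c: "c \<in> carrier R"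
    and pw: "\<And>i. i \<in> I \<Longrightarrow> x i \<oplus> y i \<oplus> z i = c \<otimes> w i"
  shows "finsum R x I \<oplus> finsum R y I \<oplus> finsum R z I = c \<otimes> finsum R w I"
proof -
  have "finsum R x I \<oplus> finsum R y I \<oplus> finsum R z I = finsum R (\<lambda>i. x i \<oplus> y i) I \<oplus> finsum R z I"
    using finsum_addf[OF x y] by simp
  also have "\<dots> = finsum R (\<lambda>i. x i \<oplus> y i \<oplus> z i) I"
  proof -
    have xy: "(\<lambda>i. x i \<oplus> y i) \<in> I \<rightarrow> carrier R" using x y by auto
    show ?thesis using finsum_addf[OF xy z] by simp
  qed
  also have "\<dots> = finsum R (\<lambda>i. c \<otimes> w i) I"
    by (rule finsum_cong) (use x y z pw c w in \<open>auto simp: simp_implies_def\<close>)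
  also have "\<dots> = c \<otimes> finsum R w I" using finsum_rdistr[OF fin c w] by simp
  finally show ?thesis .
qed

lemma key_sys:
  assumes j: "j \<in> {1..k}" and f: "is_file R k NN f" and f': "is_file R k NN f'" and r: "r < NN"
    and H: "\<forall>i\<in>{1..k+2} - {j}. \<one> \<otimes> nc i f r \<oplus> \<one> \<otimes> nc i f (flip_bit (k+1-j) r)
                          = \<one> \<otimes> nc i f' r \<oplus> \<one> \<otimes> nc i f' (flip_bit (k+1-j) r)"
  shows "nc j f r = nc j f' r \<and> nc j f (flip_bit (k+1-j) r) = nc j f' (flip_bit (k+1-j) r)"
proof -
  define r' where "r' = flip_bit (k+1-j) r"
  have r': "r' < NN" unfolding r'_def using flip_props(1)[of "k+1-j" k r] r j by auto
  have bits: "\<And>n. bit r' n \<longleftrightarrow> (if n = k+1-j then \<not> bit r n else bit r n)"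
    unfolding r'_def using flip_props(3)[of "k+1-j" k r] r j by auto
  have H': "\<And>i. i \<in> {1..k+2} - {j} \<Longrightarrow> nc i f r \<oplus> nc i f r' = nc i f' r \<oplus> nc i f' r'"
    using H nc_carr[OF f r] nc_carr[OF f r'] nc_carr[OF f' r] nc_carr[OF f' r'] unfolding r'_def[symmetric]
    by auto
  have lc: "\<And>i. i \<in> {1..k} \<Longrightarrow> i \<noteq> j \<Longrightarrow> lam i r' = lam i r"
  proof -
    fix i assume i: "i \<in> {1..k}" "i \<noteq> j"
    have n1: "k+1-i \<noteq> k+1-j" using i j by auto
    have n0: "0 \<noteq> k+1-j" using j by auto
    show "lam i r' = lam i r"
      by (rule lam_cong[OF i(1)]) (simp_all only: bits n1 n0 if_False)
  qed
  have ld: "lam j r \<noteq> lam j r'"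
    using lam_sys[OF j, of r r'] bits j by auto
  define g where "g f i = f i r \<oplus> f i r'" for f :: "nat \<Rightarrow> nat \<Rightarrow> nat" and i
  define h where "h f i = lam i r \<otimes> f i r \<oplus> lam i r' \<otimes> f i r'" for f :: "nat \<Rightarrow> nat \<Rightarrow> nat" and i
  have gc: "g f \<in> {1..k} \<rightarrow> carrier R" "g f' \<in> {1..k} \<rightarrow> carrier R"
    unfolding g_def using file_carr[OF f _ r] file_carr[OF f _ r'] file_carr[OF f' _ r] file_carr[OF f' _ r'] by auto
  have hc: "h f \<in> {1..k} \<rightarrow> carrier R" "h f' \<in> {1..k} \<rightarrow> carrier R"
    unfolding h_def using file_carr[OF f _ r] file_carr[OF f _ r'] file_carr[OF f' _ r] file_carr[OF f' _ r'] lam_carr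
    by auto
  have sg: "finsum R (g ff) {1..k} = nc (k+1) ff r \<oplus> nc (k+1) ff r'" if ff: "is_file R k NN ff" for ff
    unfolding g_def nc_p1 using finsum_addf[of "\<lambda>i. ff i r" "{1..k}" "\<lambda>i. ff i r'"] file_carr[OF ff _ r] file_carr[OF ff _ r']
    by auto
  have sh: "finsum R (h ff) {1..k} = nc (k+2) ff r \<oplus> nc (k+2) ff r'" if ff: "is_file R k NN ff" for ff
    unfolding h_def nc_p2[OF ff r] nc_p2[OF ff r']
    using finsum_addf[of "\<lambda>i. lam i r \<otimes> ff i r" "{1..k}" "\<lambda>i. lam i r' \<otimes> ff i r'"] file_carr[OF ff _ r]
      file_carr[OF ff _ r'] lam_carr by auto
  have gsys: "\<And>i. i \<in> {1..k} - {j} \<Longrightarrow> g f i = g f' i"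
  proof -
    fix i assume i: "i \<in> {1..k} - {j}"
    then have i2: "i \<in> {1..k+2} - {j}" by auto
    have i1: "i \<in> {1..k}" using i by auto
    show "g f i = g f' i" using H'[OF i2] unfolding g_def nc_sys[OF i1] .
  qed
  have G: "finsum R (g f) {j} = finsum R (g f') {j}"
    by (rule sum_part_eq[OF _ _ gc]) (use j sg[OF f] sg[OF f'] H'[of "k+1"] gsys in auto)
  have hsys: "\<And>i. i \<in> {1..k} - {j} \<Longrightarrow> h f i = h f' i"
  proof -
    fix i assume i: "i \<in> {1..k} - {j}"
    have "h ff i = lam i r \<otimes> g ff i" if ff: "is_file R k NN ff" for ff
      unfolding h_def g_def using lc[of i] i file_carr[OF ff _ r] file_carr[OF ff _ r'] lam_carr[of i r]
      by (simp add: r_distr)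
    then show "h f i = h f' i" using gsys[OF i] f f' by simp
  qed
  have Hh: "finsum R (h f) {j} = finsum R (h f') {j}"
    by (rule sum_part_eq[OF _ _ hc]) (use j sh[OF f] sh[OF f'] H'[of "k+2"] hsys in auto)
  have jc: "f j r \<in> carrier R" "f j r' \<in> carrier R" "f' j r \<in> carrier R" "f' j r' \<in> carrier R"
    using file_carr[OF f j r] file_carr[OF f j r'] file_carr[OF f' j r] file_carr[OF f' j r'] by auto
  have gj: "g f j \<in> carrier R" "g f' j \<in> carrier R" using gc j by auto
  have hj: "h f j \<in> carrier R" "h f' j \<in> carrier R" using hc j by auto
  have "g f j = g f' j" using G finsum_one[of "g f" j, OF gj(1)] finsum_one[of "g f'" j, OF gj(2)] by simp
  then have e1: "f j r \<oplus> f j r' = f' j r \<oplus> f' j r'" unfolding g_def .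
  have "h f j = h f' j" using Hh finsum_one[of "h f" j, OF hj(1)] finsum_one[of "h f'" j, OF hj(2)] by simp
  then have e2: "lam j r \<otimes> f j r \<oplus> lam j r' \<otimes> f j r' = lam j r \<otimes> f' j r \<oplus> lam j r' \<otimes> f' j r'"
    unfolding h_def .
  have "f j r = f' j r \<and> f j r' = f' j r'"
    by (rule lin2[OF jc(1,2,3,4) lam_carr[OF j] lam_carr[OF j] e1 e2 ld])
  then show ?thesis using nc_sys[OF j] unfolding r'_def by simp
qed

end

context RC begin

lemma pw1:
  assumes c: "l \<in> carrier R" "l' \<in> carrier R" "x \<in> carrier R" "y \<in> carrier R"
    and e: "l \<oplus> l' = \<one> \<oplus> \<one>"
  shows "l \<otimes> x \<oplus> l' \<otimes> y \<oplus> l' \<otimes> (x \<ominus> y) = (\<one> \<oplus> \<one>) \<otimes> x"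
    "l \<otimes> x \<oplus> l' \<otimes> y \<oplus> (\<ominus> l) \<otimes> (x \<ominus> y) = (\<one> \<oplus> \<one>) \<otimes> y"
proof -
  have "l \<otimes> x \<oplus> l' \<otimes> y \<oplus> l' \<otimes> (x \<ominus> y) = (l \<oplus> l') \<otimes> x" using c by algebra
  then show "l \<otimes> x \<oplus> l' \<otimes> y \<oplus> l' \<otimes> (x \<ominus> y) = (\<one> \<oplus> \<one>) \<otimes> x" using e by simp
  have "l \<otimes> x \<oplus> l' \<otimes> y \<oplus> (\<ominus> l) \<otimes> (x \<ominus> y) = (l \<oplus> l') \<otimes> y" using c by algebra
  then show "l \<otimes> x \<oplus> l' \<otimes> y \<oplus> (\<ominus> l) \<otimes> (x \<ominus> y) = (\<one> \<oplus> \<one>) \<otimes> y" using e by simp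
qed

lemma pw2:
  assumes c: "l \<in> carrier R" "l' \<in> carrier R" "m \<in> carrier R" "m' \<in> carrier R" "x \<in> carrier R" "y \<in> carrier R"
    and e1: "m \<otimes> l = \<one>" and e2: "m' \<otimes> l' = \<one>" and e3: "m \<oplus> m' = \<one>"
  shows "x \<oplus> y \<oplus> m' \<otimes> (l \<otimes> x \<ominus> l' \<otimes> y) = \<one> \<otimes> (l \<otimes> x)"
    "x \<oplus> y \<oplus> (\<ominus> m) \<otimes> (l \<otimes> x \<ominus> l' \<otimes> y) = \<one> \<otimes> (l' \<otimes> y)"
proof -
  have "x \<oplus> y \<oplus> m' \<otimes> (l \<otimes> x \<ominus> l' \<otimes> y) = ((m \<oplus> m') \<otimes> l) \<otimes> x \<oplus> (\<one> \<ominus> m' \<otimes> l') \<otimes> y \<oplus> (\<one> \<ominus> m \<otimes> l) \<otimes> x"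
    using c by algebra
  also have "\<dots> = (\<one> \<otimes> l) \<otimes> x \<oplus> (\<one> \<ominus> \<one>) \<otimes> y \<oplus> (\<one> \<ominus> \<one>) \<otimes> x" by (simp only: e1 e2 e3)
  also have "\<dots> = \<one> \<otimes> (l \<otimes> x)" using c by algebra
  finally show "x \<oplus> y \<oplus> m' \<otimes> (l \<otimes> x \<ominus> l' \<otimes> y) = \<one> \<otimes> (l \<otimes> x)" .
  have "x \<oplus> y \<oplus> (\<ominus> m) \<otimes> (l \<otimes> x \<ominus> l' \<otimes> y) = ((m \<oplus> m') \<otimes> l') \<otimes> y \<oplus> (\<one> \<ominus> m \<otimes> l) \<otimes> x \<oplus> (\<one> \<ominus> m' \<otimes> l') \<otimes> y"
    using c by algebra
  also have "\<dots> = (\<one> \<otimes> l') \<otimes> y \<oplus> (\<one> \<ominus> \<one>) \<otimes> x \<oplus> (\<one> \<ominus> \<one>) \<otimes> y" by (simp only: e1 e2 e3)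
  also have "\<dots> = \<one> \<otimes> (l' \<otimes> y)" using c by algebra
  finally show "x \<oplus> y \<oplus> (\<ominus> m) \<otimes> (l \<otimes> x \<ominus> l' \<otimes> y) = \<one> \<otimes> (l' \<otimes> y)" .
qed

lemma key_p1:
  assumes f: "is_file R k NN f" and f': "is_file R k NN f'" and r: "r < NN"
    and H: "\<forall>i\<in>{1..k+2} - {k+1}.
       \<one> \<otimes> nc i f r \<oplus> (if i = k+2 then \<one> else \<ominus> \<one>) \<otimes> nc i f (xor r (mask (k+1)))
     = \<one> \<otimes> nc i f' r \<oplus> (if i = k+2 then \<one> else \<ominus> \<one>) \<otimes> nc i f' (xor r (mask (k+1)))"
  shows "nc (k+1) f r = nc (k+1) f' r \<and> nc (k+1) f (xor r (mask (k+1))) = nc (k+1) f' (xor r (mask (k+1)))"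
proof -
  define r' where "r' = xor r (mask (k+1))"
  have r': "r' < NN" unfolding r'_def using xor_props(1)[OF mask_lt(1) r] .
  have bits: "\<And>n. bit r' n \<longleftrightarrow> (bit r n \<noteq> (n < k+1))"
    unfolding r'_def using xor_props(3)[OF mask_lt(1) r] by (simp add: bit_mask_iff)
  have lp: "\<And>i. i \<in> {1..k} \<Longrightarrow> lam i r \<oplus> lam i r' = \<one> \<oplus> \<one>"
    by (rule lam_par1) (auto simp: bits)
  have hd: "\<And>i. i \<in> {1..k} \<Longrightarrow> f i r \<ominus> f i r' = f' i r \<ominus> f' i r'"
  proof -
    fix i assume i: "i \<in> {1..k}"
    have i2: "i \<in> {1..k+2} - {k+1}" "i \<noteq> k+2" using i by auto
    have c: "f i r \<in> carrier R" "f i r' \<in> carrier R" "f' i r \<in> carrier R" "f' i r' \<in> carrier R"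
      using file_carr[OF f i r] file_carr[OF f i r'] file_carr[OF f' i r] file_carr[OF f' i r'] by auto
    have "\<one> \<otimes> f i r \<oplus> (\<ominus> \<one>) \<otimes> f i r' = \<one> \<otimes> f' i r \<oplus> (\<ominus> \<one>) \<otimes> f' i r'"
      using bspec[OF H i2(1)] i2(2) unfolding r'_def nc_sys[OF i] by simp
    moreover have "\<one> \<otimes> f i r \<oplus> (\<ominus> \<one>) \<otimes> f i r' = f i r \<ominus> f i r'" using c by algebra
    moreover have "\<one> \<otimes> f' i r \<oplus> (\<ominus> \<one>) \<otimes> f' i r' = f' i r \<ominus> f' i r'" using c by algebra
    ultimately show "f i r \<ominus> f i r' = f' i r \<ominus> f' i r'" by simp
  qed
  have hq: "nc (k+2) f r \<oplus> nc (k+2) f r' = nc (k+2) f' r \<oplus> nc (k+2) f' r'"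
  proof -
    have "\<one> \<otimes> nc (k+2) f r \<oplus> \<one> \<otimes> nc (k+2) f r' = \<one> \<otimes> nc (k+2) f' r \<oplus> \<one> \<otimes> nc (k+2) f' r'"
      using bspec[OF H, of "k+2"] unfolding r'_def by simp
    then show ?thesis using nc_carr[OF f r] nc_carr[OF f r'] nc_carr[OF f' r] nc_carr[OF f' r'] by simp
  qed
  have I1: "(\<one> \<oplus> \<one>) \<otimes> finsum R (\<lambda>i. ff i r) {1..k}
      = (nc (k+2) ff r \<oplus> nc (k+2) ff r') \<oplus> finsum R (\<lambda>i. lam i r' \<otimes> (ff i r \<ominus> ff i r')) {1..k}"
    and I2: "(\<one> \<oplus> \<one>) \<otimes> finsum R (\<lambda>i. ff i r') {1..k}
      = (nc (k+2) ff r \<oplus> nc (k+2) ff r') \<oplus> finsum R (\<lambda>i. (\<ominus> lam i r) \<otimes> (ff i r \<ominus> ff i r')) {1..k}"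
    if ff: "is_file R k NN ff" for ff
  proof -
    have c: "\<And>i. i \<in> {1..k} \<Longrightarrow> ff i r \<in> carrier R \<and> ff i r' \<in> carrier R \<and> lam i r \<in> carrier R \<and> lam i r' \<in> carrier R"
      using file_carr[OF ff _ r] file_carr[OF ff _ r'] lam_carr by auto
    show "(\<one> \<oplus> \<one>) \<otimes> finsum R (\<lambda>i. ff i r) {1..k}
      = (nc (k+2) ff r \<oplus> nc (k+2) ff r') \<oplus> finsum R (\<lambda>i. lam i r' \<otimes> (ff i r \<ominus> ff i r')) {1..k}"
      unfolding nc_p2[OF ff r] nc_p2[OF ff r']
      by (rule sym, rule sum3) (use c pw1(1) lp in auto)
    show "(\<one> \<oplus> \<one>) \<otimes> finsum R (\<lambda>i. ff i r') {1..k}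
      = (nc (k+2) ff r \<oplus> nc (k+2) ff r') \<oplus> finsum R (\<lambda>i. (\<ominus> lam i r) \<otimes> (ff i r \<ominus> ff i r')) {1..k}"
      unfolding nc_p2[OF ff r] nc_p2[OF ff r']
      by (rule sym, rule sum3) (use c pw1(2) lp in auto)
  qed
  have z1: "finsum R (\<lambda>i. lam i r' \<otimes> (f i r \<ominus> f i r')) {1..k} = finsum R (\<lambda>i. lam i r' \<otimes> (f' i r \<ominus> f' i r')) {1..k}"
    by (rule finsum_cong) (use hd file_carr[OF f _ r] file_carr[OF f _ r'] file_carr[OF f' _ r] file_carr[OF f' _ r'] lam_carr in \<open>auto simp: simp_implies_def\<close>)
  have z2: "finsum R (\<lambda>i. (\<ominus> lam i r) \<otimes> (f i r \<ominus> f i r')) {1..k} = finsum R (\<lambda>i. (\<ominus> lam i r) \<otimes> (f' i r \<ominus> f' i r')) {1..k}"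
    by (rule finsum_cong) (use hd file_carr[OF f _ r] file_carr[OF f _ r'] file_carr[OF f' _ r] file_carr[OF f' _ r'] lam_carr in \<open>auto simp: simp_implies_def\<close>)
  have s1: "(\<one> \<oplus> \<one>) \<otimes> finsum R (\<lambda>i. f i r) {1..k} = (\<one> \<oplus> \<one>) \<otimes> finsum R (\<lambda>i. f' i r) {1..k}"
    using I1[OF f] I1[OF f'] hq z1 by simp
  have s2: "(\<one> \<oplus> \<one>) \<otimes> finsum R (\<lambda>i. f i r') {1..k} = (\<one> \<oplus> \<one>) \<otimes> finsum R (\<lambda>i. f' i r') {1..k}"
    using I2[OF f] I2[OF f'] hq z2 by simp
  have cs: "finsum R (\<lambda>i. f i r) {1..k} \<in> carrier R" "finsum R (\<lambda>i. f' i r) {1..k} \<in> carrier R"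
    "finsum R (\<lambda>i. f i r') {1..k} \<in> carrier R" "finsum R (\<lambda>i. f' i r') {1..k} \<in> carrier R"
    using file_carr[OF f _ r] file_carr[OF f _ r'] file_carr[OF f' _ r] file_carr[OF f' _ r']
    by (auto intro!: finsum_closed)
  have "finsum R (\<lambda>i. f i r) {1..k} = finsum R (\<lambda>i. f' i r) {1..k}"
    using m_lcancel[OF two_nz _ cs(1) cs(2)] s1 by simp
  moreover have "finsum R (\<lambda>i. f i r') {1..k} = finsum R (\<lambda>i. f' i r') {1..k}"
    using m_lcancel[OF two_nz _ cs(3) cs(4)] s2 by simp
  ultimately show ?thesis unfolding nc_p1 r'_def by simp
qed

end

context RC begin

lemma key_p2:
  assumes f: "is_file R k NN f" and f': "is_file R k NN f'" and r: "r < NN"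
    and H: "\<forall>i\<in>{1..k+2} - {k+2}.
       (if i = k+1 then \<one> else lam i r) \<otimes> nc i f r \<oplus> (if i = k+1 then \<one> else \<ominus> lam i (xor r (2 * mask k))) \<otimes> nc i f (xor r (2 * mask k))
     = (if i = k+1 then \<one> else lam i r) \<otimes> nc i f' r \<oplus> (if i = k+1 then \<one> else \<ominus> lam i (xor r (2 * mask k))) \<otimes> nc i f' (xor r (2 * mask k))"
  shows "nc (k+2) f r = nc (k+2) f' r \<and> nc (k+2) f (xor r (2 * mask k)) = nc (k+2) f' (xor r (2 * mask k))"
proof -
  define r' where "r' = xor r (2 * mask k)"
  have r': "r' < NN" unfolding r'_def using xor_props(1)[OF mask_lt(2) r] .
  have bits: "\<And>n. bit r' n \<longleftrightarrow> (bit r n \<noteq> (0 < n \<and> n \<le> k))"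
    unfolding r'_def using xor_props(3)[OF mask_lt(2) r] by (simp add: bit_mask2)
  have lp: "\<And>i. i \<in> {1..k} \<Longrightarrow> inv (lam i r) \<oplus> inv (lam i r') = \<one>"
    by (rule lam_par2) (auto simp: bits)
  have hd: "\<And>i. i \<in> {1..k} \<Longrightarrow> lam i r \<otimes> f i r \<ominus> lam i r' \<otimes> f i r' = lam i r \<otimes> f' i r \<ominus> lam i r' \<otimes> f' i r'"
  proof -
    fix i assume i: "i \<in> {1..k}"
    have i2: "i \<in> {1..k+2} - {k+2}" "i \<noteq> k+1" using i by auto
    have c: "f i r \<in> carrier R" "f i r' \<in> carrier R" "f' i r \<in> carrier R" "f' i r' \<in> carrier R"
      "lam i r \<in> carrier R" "lam i r' \<in> carrier R"
      using file_carr[OF f i r] file_carr[OF f i r'] file_carr[OF f' i r] file_carr[OF f' i r'] lam_carr[OF i] by auto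
    have "lam i r \<otimes> f i r \<oplus> (\<ominus> lam i r') \<otimes> f i r' = lam i r \<otimes> f' i r \<oplus> (\<ominus> lam i r') \<otimes> f' i r'"
      using bspec[OF H i2(1)] i2(2) unfolding r'_def nc_sys[OF i] by simp
    moreover have "lam i r \<otimes> f i r \<oplus> (\<ominus> lam i r') \<otimes> f i r' = lam i r \<otimes> f i r \<ominus> lam i r' \<otimes> f i r'" using c by algebra
    moreover have "lam i r \<otimes> f' i r \<oplus> (\<ominus> lam i r') \<otimes> f' i r' = lam i r \<otimes> f' i r \<ominus> lam i r' \<otimes> f' i r'" using c by algebra
    ultimately show "lam i r \<otimes> f i r \<ominus> lam i r' \<otimes> f i r' = lam i r \<otimes> f' i r \<ominus> lam i r' \<otimes> f' i r'" by simp
  qed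
  have hq: "nc (k+1) f r \<oplus> nc (k+1) f r' = nc (k+1) f' r \<oplus> nc (k+1) f' r'"
  proof -
    have "\<one> \<otimes> nc (k+1) f r \<oplus> \<one> \<otimes> nc (k+1) f r' = \<one> \<otimes> nc (k+1) f' r \<oplus> \<one> \<otimes> nc (k+1) f' r'"
      using bspec[OF H, of "k+1"] unfolding r'_def by simp
    then show ?thesis using nc_carr[OF f r] nc_carr[OF f r'] nc_carr[OF f' r] nc_carr[OF f' r'] by simp
  qed
  have I1: "\<one> \<otimes> nc (k+2) ff r
      = (nc (k+1) ff r \<oplus> nc (k+1) ff r') \<oplus> finsum R (\<lambda>i. inv (lam i r') \<otimes> (lam i r \<otimes> ff i r \<ominus> lam i r' \<otimes> ff i r')) {1..k}"
    and I2: "\<one> \<otimes> nc (k+2) ff r'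
      = (nc (k+1) ff r \<oplus> nc (k+1) ff r') \<oplus> finsum R (\<lambda>i. (\<ominus> (inv (lam i r))) \<otimes> (lam i r \<otimes> ff i r \<ominus> lam i r' \<otimes> ff i r')) {1..k}"
    if ff: "is_file R k NN ff" for ff
  proof -
    have c: "\<And>i. i \<in> {1..k} \<Longrightarrow> ff i r \<in> carrier R \<and> ff i r' \<in> carrier R \<and> lam i r \<in> carrier R \<and> lam i r' \<in> carrier R
       \<and> inv (lam i r) \<in> carrier R \<and> inv (lam i r') \<in> carrier R
       \<and> inv (lam i r) \<otimes> lam i r = \<one> \<and> inv (lam i r') \<otimes> lam i r' = \<one>"
      using file_carr[OF ff _ r] file_carr[OF ff _ r'] lam_carr inv_facts[OF lam_carr lam_nz] by auto
    show "\<one> \<otimes> nc (k+2) ff r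
      = (nc (k+1) ff r \<oplus> nc (k+1) ff r') \<oplus> finsum R (\<lambda>i. inv (lam i r') \<otimes> (lam i r \<otimes> ff i r \<ominus> lam i r' \<otimes> ff i r')) {1..k}"
      unfolding nc_p2[OF ff r] nc_p1
    proof (rule sym, rule sum3)
      fix i assume i: "i \<in> {1..k}"
      show "ff i r \<oplus> ff i r' \<oplus> inv (lam i r') \<otimes> (lam i r \<otimes> ff i r \<ominus> lam i r' \<otimes> ff i r') = \<one> \<otimes> (lam i r \<otimes> ff i r)"
        using pw2(1)[of "lam i r" "lam i r'" "inv (lam i r)" "inv (lam i r')" "ff i r" "ff i r'"] c[OF i] lp[OF i] by blast
    qed (use c in auto)
    show "\<one> \<otimes> nc (k+2) ff r'
      = (nc (k+1) ff r \<oplus> nc (k+1) ff r') \<oplus> finsum R (\<lambda>i. (\<ominus> (inv (lam i r))) \<otimes> (lam i r \<otimes> ff i r \<ominus> lam i r' \<otimes> ff i r')) {1..k}"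
      unfolding nc_p2[OF ff r'] nc_p1
    proof (rule sym, rule sum3)
      fix i assume i: "i \<in> {1..k}"
      show "ff i r \<oplus> ff i r' \<oplus> (\<ominus> (inv (lam i r))) \<otimes> (lam i r \<otimes> ff i r \<ominus> lam i r' \<otimes> ff i r') = \<one> \<otimes> (lam i r' \<otimes> ff i r')"
        using pw2(2)[of "lam i r" "lam i r'" "inv (lam i r)" "inv (lam i r')" "ff i r" "ff i r'"] c[OF i] lp[OF i] by blast
    qed (use c in auto)
  qed
  have cc: "\<And>i. i \<in> {1..k} \<Longrightarrow> f i r \<in> carrier R \<and> f i r' \<in> carrier R \<and> f' i r \<in> carrier R \<and> f' i r' \<in> carrier R
     \<and> lam i r \<in> carrier R \<and> lam i r' \<in> carrier R \<and> inv (lam i r) \<in> carrier R \<and> inv (lam i r') \<in> carrier R"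
    using file_carr[OF f _ r] file_carr[OF f _ r'] file_carr[OF f' _ r] file_carr[OF f' _ r'] lam_carr
      inv_facts[OF lam_carr lam_nz] by auto
  have z1: "finsum R (\<lambda>i. inv (lam i r') \<otimes> (lam i r \<otimes> f i r \<ominus> lam i r' \<otimes> f i r')) {1..k}
          = finsum R (\<lambda>i. inv (lam i r') \<otimes> (lam i r \<otimes> f' i r \<ominus> lam i r' \<otimes> f' i r')) {1..k}"
    by (rule finsum_cong) (use hd cc in \<open>auto simp: simp_implies_def\<close>)
  have z2: "finsum R (\<lambda>i. (\<ominus> (inv (lam i r))) \<otimes> (lam i r \<otimes> f i r \<ominus> lam i r' \<otimes> f i r')) {1..k}
          = finsum R (\<lambda>i. (\<ominus> (inv (lam i r))) \<otimes> (lam i r \<otimes> f' i r \<ominus> lam i r' \<otimes> f' i r')) {1..k}"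
    by (rule finsum_cong) (use hd cc in \<open>auto simp: simp_implies_def\<close>)
  have "\<one> \<otimes> nc (k+2) f r = \<one> \<otimes> nc (k+2) f' r" using I1[OF f] I1[OF f'] hq z1 by simp
  moreover have "\<one> \<otimes> nc (k+2) f r' = \<one> \<otimes> nc (k+2) f' r'" using I2[OF f] I2[OF f'] hq z2 by simp
  ultimately show ?thesis
    using nc_carr[OF f r] nc_carr[OF f r'] nc_carr[OF f' r] nc_carr[OF f' r'] unfolding r'_def by simp
qed

end

context RC begin

lemma rep_node:
  assumes j: "j \<in> {1..k+2}"
  shows "\<exists>S :: nat \<Rightarrow> nat \<Rightarrow> nat \<Rightarrow> nat.
        (\<forall>i\<in>{1..k+2} - {j}. \<forall>s<NN div 2. \<forall>c<NN. S i s c \<in> carrier R) \<and>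
        (\<forall>f f'. is_file R k NN f \<and> is_file R k NN f' \<and>
           (\<forall>i s. download R k NN AK j S f i s = download R k NN AK j S f' i s)
           \<longrightarrow> (\<forall>r<NN. nc j f r = nc j f' r))"
proof -
  consider (s) "j \<in> {1..k}" | (p) "j = k+1" | (q) "j = k+2" using j by force
  then show ?thesis
  proof cases
    case s
    have m: "k+1-j \<le> k" using s by auto
    show ?thesis
    proof (rule repair_frame[of j "flip_bit (k+1-j)" "\<lambda>r. \<not> bit r (k+1-j)" "\<lambda>i r. \<one>" "\<lambda>i r. \<one>"])
      show "j \<in> {1..k+2}" using j .
    next
      fix r assume r: "r < NN" show "flip_bit (k+1-j) r < NN" using flip_props(1)[OF m r] .
    next
      fix r assume r: "r < NN" show "flip_bit (k+1-j) (flip_bit (k+1-j) r) = r" using flip_props(2)[OF m r] .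
    next
      fix r assume r: "r < NN" show "(\<not> bit (flip_bit (k+1-j) r) (k+1-j)) \<longleftrightarrow> \<not> (\<not> bit r (k+1-j))"
        using flip_props(3)[OF m r] by simp
    next
      fix i r show "\<one> \<in> carrier R \<and> \<one> \<in> carrier R" by simp
    next
      fix f f' r
      assume "is_file R k NN f" "is_file R k NN f'" "r < NN"
        "\<forall>i\<in>{1..k+2} - {j}. \<one> \<otimes> nc i f r \<oplus> \<one> \<otimes> nc i f (flip_bit (k+1-j) r)
                          = \<one> \<otimes> nc i f' r \<oplus> \<one> \<otimes> nc i f' (flip_bit (k+1-j) r)"
      then show "nc j f r = nc j f' r \<and> nc j f (flip_bit (k+1-j) r) = nc j f' (flip_bit (k+1-j) r)"
        using key_sys[OF s] by blast
    qed
  next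
    case p
    have pk: "bit (xor r (mask (k+1))) k \<longleftrightarrow> \<not> bit r k" for r :: nat
      by (simp add: bit_xor_iff bit_mask_iff)
    show ?thesis unfolding p
    proof (rule repair_frame[of "k+1" "\<lambda>r. xor r (mask (k+1))" "\<lambda>r. \<not> bit r k" "\<lambda>i r. \<one>"
          "\<lambda>i r. if i = k+2 then \<one> else \<ominus> \<one>"])
      show "k+1 \<in> {1..k+2}" by simp
    next
      fix r assume r: "r < NN" show "xor r (mask (k+1)) < NN" using xor_props(1)[OF mask_lt(1) r] .
    next
      fix r assume r: "r < NN" show "xor (xor r (mask (k+1))) (mask (k+1)) = r" using xor_props(2)[OF mask_lt(1) r] .
    next
      fix r :: nat show "(\<not> bit (xor r (mask (k+1))) k) \<longleftrightarrow> \<not> (\<not> bit r k)" using pk by simp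
    next
      fix i r show "\<one> \<in> carrier R \<and> (if i = k+2 then \<one> else \<ominus> \<one>) \<in> carrier R" by simp
    next
      fix f f' r
      assume "is_file R k NN f" "is_file R k NN f'" "r < NN"
        "\<forall>i\<in>{1..k+2} - {k+1}.
       \<one> \<otimes> nc i f r \<oplus> (if i = k+2 then \<one> else \<ominus> \<one>) \<otimes> nc i f (xor r (mask (k+1)))
     = \<one> \<otimes> nc i f' r \<oplus> (if i = k+2 then \<one> else \<ominus> \<one>) \<otimes> nc i f' (xor r (mask (k+1)))"
      then show "nc (k+1) f r = nc (k+1) f' r \<and> nc (k+1) f (xor r (mask (k+1))) = nc (k+1) f' (xor r (mask (k+1)))"
        using key_p1 by blast
    qed
  next
    case q
    have pk: "bit (xor r (2 * mask k)) k \<longleftrightarrow> \<not> bit r k" for r :: nat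
      using k1 by (simp add: bit_xor_iff bit_mask2)
    show ?thesis unfolding q
    proof (rule repair_frame[of "k+2" "\<lambda>r. xor r (2 * mask k)" "\<lambda>r. \<not> bit r k"
          "\<lambda>i r. if i = k+1 then \<one> else lam i r"
          "\<lambda>i r. if i = k+1 then \<one> else \<ominus> lam i (xor r (2 * mask k))"])
      show "k+2 \<in> {1..k+2}" by simp
    next
      fix r assume r: "r < NN" show "xor r (2 * mask k) < NN" using xor_props(1)[OF mask_lt(2) r] .
    next
      fix r assume r: "r < NN" show "xor (xor r (2 * mask k)) (2 * mask k) = r" using xor_props(2)[OF mask_lt(2) r] .
    next
      fix r :: nat show "(\<not> bit (xor r (2 * mask k)) k) \<longleftrightarrow> \<not> (\<not> bit r k)" using pk by simp
    next
      fix i r assume i: "i \<in> {1..k+2} - {k+2}"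
      show "(if i = k+1 then \<one> else lam i r) \<in> carrier R \<and>
            (if i = k+1 then \<one> else \<ominus> lam i (xor r (2 * mask k))) \<in> carrier R"
        using i lam_carr by auto
    next
      fix f f' r
      assume "is_file R k NN f" "is_file R k NN f'" "r < NN"
        "\<forall>i\<in>{1..k+2} - {k+2}.
       (if i = k+1 then \<one> else lam i r) \<otimes> nc i f r \<oplus> (if i = k+1 then \<one> else \<ominus> lam i (xor r (2 * mask k))) \<otimes> nc i f (xor r (2 * mask k))
     = (if i = k+1 then \<one> else lam i r) \<otimes> nc i f' r \<oplus> (if i = k+1 then \<one> else \<ominus> lam i (xor r (2 * mask k))) \<otimes> nc i f' (xor r (2 * mask k))"
      then show "nc (k+2) f r = nc (k+2) f' r \<and> nc (k+2) f (xor r (2 * mask k)) = nc (k+2) f' (xor r (2 * mask k))"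
        using key_p2 by blast
    qed
  qed
qed

lemma REP: "repair_optimal R k NN AK"
  unfolding repair_optimal_def using rep_node by blast

end

lemma ZP_RC:
  assumes p: "Factorial_Ring.prime p" and pb: "(k+1)*(k+1) < p" and k: "1 \<le> k"
  shows "RC (ZP p) k (\<lambda>i. i + 1)"
proof -
  have F: "field (ZP p)" using ZP_field[OF p] .
  have "2*2 \<le> (k+1)*(k+1)" using k by (intro mult_le_mono) auto
  then have p2: "2 < p" using pb by simp
  show ?thesis
  proof (intro RC.intro[OF F] RC_axioms.intro)
    show "1 \<le> k" using k .
  next
    fix i :: nat assume i: "i \<in> {1..k}"
    have "i + 1 \<le> (k+1)*(k+1)" using i by (simp add: trans_le_add1)
    then show "i + 1 \<in> carrier (ZP p)" using pb unfolding ZP_def by simp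
  next
    fix i :: nat assume i: "i \<in> {1..k}"
    show "i + 1 \<noteq> \<zero>\<^bsub>ZP p\<^esub>" unfolding ZP_def by simp
  next
    fix i :: nat assume i: "i \<in> {1..k}"
    have le: "(i+1)*(i+1) \<le> (k+1)*(k+1)" using i by (intro mult_le_mono) auto
    have "(i+1)*(i+1) mod p = (i+1)*(i+1)" using le pb by simp
    moreover have "(i+1)*(i+1) \<noteq> 1" using i by simp
    ultimately show "(i + 1) \<otimes>\<^bsub>ZP p\<^esub> (i + 1) \<noteq> \<one>\<^bsub>ZP p\<^esub>" unfolding ZP_def by simp
  next
    fix i j :: nat assume "i \<in> {1..k}" "j \<in> {1..k}" "i \<noteq> j"
    then show "i + 1 \<noteq> j + 1" by simp
  next
    fix i j :: nat assume i: "i \<in> {1..k}" and j: "j \<in> {1..k}" and "i \<noteq> j"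
    have le: "(i+1)*(j+1) \<le> (k+1)*(k+1)" using i j by (intro mult_le_mono) auto
    have "(i+1)*(j+1) mod p = (i+1)*(j+1)" using le pb by simp
    moreover have "(i+1)*(j+1) \<noteq> 1" using i j by simp
    ultimately have ne: "(i+1)*(j+1) mod p \<noteq> 1" by simp
    have "(i + 1) \<otimes>\<^bsub>ZP p\<^esub> (j + 1) = (i+1)*(j+1) mod p" unfolding ZP_def by (simp add: algebra_simps)
    then show "(i + 1) \<otimes>\<^bsub>ZP p\<^esub> (j + 1) \<noteq> \<one>\<^bsub>ZP p\<^esub>" using ne unfolding ZP_def by simp
  next
    show "\<one>\<^bsub>ZP p\<^esub> \<oplus>\<^bsub>ZP p\<^esub> \<one>\<^bsub>ZP p\<^esub> \<noteq> \<zero>\<^bsub>ZP p\<^esub>" using p2 unfolding ZP_def by simp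
  qed
qed

theorem theorem1:
  fixes k :: nat
  assumes "k \<ge> 1"
  shows "\<exists>(R :: nat ring) a b.
           field R \<and> finite (carrier R) \<and> card (carrier R) \<ge> 2 * k + 3 \<and>
           (\<forall>i\<in>{1..k}. a i \<in> carrier R \<and> b i \<in> carrier R \<and>
              (a i \<otimes>\<^bsub>R\<^esub> a i) \<ominus>\<^bsub>R\<^esub> (b i \<otimes>\<^bsub>R\<^esub> b i) = \<ominus>\<^bsub>R\<^esub> \<one>\<^bsub>R\<^esub>) \<and>
           is_MDS_code R k (2 ^ (k + 1)) (coding_mats R k (2 ^ (k + 1)) a b) \<and>
           repair_optimal R k (2 ^ (k + 1)) (coding_mats R k (2 ^ (k + 1)) a b)"
proof -
  obtain p :: nat where p: "Factorial_Ring.prime p" and pb: "(k+1)*(k+1) + 2*k + 3 < p"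
    using bigger_prime by blast
  have pb1: "(k+1)*(k+1) < p" using pb by simp
  interpret RC "ZP p" k "\<lambda>i. i + 1" using ZP_RC[OF p pb1 assms] .
  show ?thesis
  proof (intro exI conjI ballI)
    show "field (ZP p)" by (rule field_axioms)
    show "finite (carrier (ZP p))" unfolding ZP_def by simp
    show "2 * k + 3 \<le> card (carrier (ZP p))" using pb unfolding ZP_def by simp
  next
    fix i assume i: "i \<in> {1..k}"
    show "aa (ZP p) (\<lambda>i. i + 1) i \<in> carrier (ZP p)" using aa_carr[OF i] .
    show "bb (ZP p) (\<lambda>i. i + 1) i \<in> carrier (ZP p)" using bb_carr[OF i] .
    show "aa (ZP p) (\<lambda>i. i + 1) i \<otimes>\<^bsub>ZP p\<^esub> aa (ZP p) (\<lambda>i. i + 1) i \<ominus>\<^bsub>ZP p\<^esub>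
          bb (ZP p) (\<lambda>i. i + 1) i \<otimes>\<^bsub>ZP p\<^esub> bb (ZP p) (\<lambda>i. i + 1) i = \<ominus>\<^bsub>ZP p\<^esub> \<one>\<^bsub>ZP p\<^esub>"
      using ab_rel[OF i] .
  next
    show "is_MDS_code (ZP p) k (2 ^ (k + 1)) (coding_mats (ZP p) k (2 ^ (k + 1)) (aa (ZP p) (\<lambda>i. i + 1)) (bb (ZP p) (\<lambda>i. i + 1)))"
      using MDS .
    show "repair_optimal (ZP p) k (2 ^ (k + 1)) (coding_mats (ZP p) k (2 ^ (k + 1)) (aa (ZP p) (\<lambda>i. i + 1)) (bb (ZP p) (\<lambda>i. i + 1)))"
      using REP .
  qed
qed

end
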